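(* Let $0<\alpha<1$, $0<\tau_1<\tau_2$, and let $\Lambda\subset\mathbb{R}^n$ be a closed set of Lebesgue measure zero. Let $f\in L_{2\alpha}(\mathbb{R}^n)\cap C^\infty(\mathbb{R}^n\setminus\Lambda)\cap L^{\tau_2}_{loc}(\mathbb{R}^n)$ satisfy: there exist $K>0$, $q>0$ such that $K^{-1}d_0(y,\Lambda)^{-q}\leq f(y)\leq Kd_0(y,\Lambda)^{-q}$ for all $y\in\mathbb{R}^n\setminus\Lambda$. Then for every $x\in\mathbb{R}^n\setminus\Lambda$, $$\big((-\Delta)^\alpha f^{\tau_1}\big)(x)\geq\frac{\tau_1}{\tau_2}f^{\tau_1-\tau_2}(x)\big((-\Delta)^\alpha f^{\tau_2}\big)(x).$$
   Context: $d_0$ is the Euclidean distance. $L_{2\alpha}(\mathbb{R}^n)=\{h:\int_{\mathbb{R}^n}\frac{|h(x)|}{1+|x|^{n+2\alpha}}dx<\infty\}$. The fractional Laplacian is $(-\Delta)^\alpha h(x)=-d_{n,\alpha}\int_{\mathbb{R}^n}\frac{h(x+y)+h(x-y)-2h(x)}{|y|^{n+2\alpha}}dy$ for $h\in L_{2\alpha}(\mathbb{R}^n)$, with $d_{n,\alpha}>0$ the normalizing constant making the Fourier symbol $|\xi|^{2\alpha}$. *)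

theory Defs
  imports "HOL-Analysis.Analysis"
begin

fun Ck_on :: "nat \<Rightarrow> 'a::euclidean_space set \<Rightarrow> ('a \<Rightarrow> real) \<Rightarrow> bool" where
  "Ck_on 0 S f = continuous_on S f"
| "Ck_on (Suc k) S f = (f differentiable_on S \<and>
      (\<forall>v. Ck_on k S (\<lambda>x. frechet_derivative f (at x) v)))"

definition smooth_on :: "'a::euclidean_space set \<Rightarrow> ('a \<Rightarrow> real) \<Rightarrow> bool" where
  "smooth_on S f \<longleftrightarrow> (\<forall>k. Ck_on k S f)"

definition L2alpha :: "real \<Rightarrow> ('a::euclidean_space \<Rightarrow> real) set" where
  "L2alpha \<alpha> = {h. h \<in> borel_measurable lborel \<and>
      integrable lborel (\<lambda>x. \<bar>h x\<bar> / (1 + norm x powr (real DIM('a) + 2 * \<alpha>)))}"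

definition Lloc :: "real \<Rightarrow> ('a::euclidean_space \<Rightarrow> real) set" where
  "Lloc p = {h. h \<in> borel_measurable lborel \<and>
      (\<forall>C. compact C \<longrightarrow> set_integrable lborel C (\<lambda>x. \<bar>h x\<bar> powr p))}"

text \<open>Normalising constant d_{n,alpha} making the Fourier symbol |xi|^(2 alpha)
  for the second-difference form: d = 2^(2a-1) a Gamma(n/2+a) / (pi^(n/2) Gamma(1-a)).\<close>
definition frac_const :: "nat \<Rightarrow> real \<Rightarrow> real" where
  "frac_const n \<alpha> = 2 powr (2 * \<alpha> - 1) * \<alpha> * Gamma (real n / 2 + \<alpha>)
      / (pi powr (real n / 2) * Gamma (1 - \<alpha>))"

definition frac_integrand :: "real \<Rightarrow> ('a::euclidean_space \<Rightarrow> real) \<Rightarrow> 'a \<Rightarrow> 'a \<Rightarrow> real" where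
  "frac_integrand \<alpha> h x y = (h (x + y) + h (x - y) - 2 * h x) / norm y powr (real DIM('a) + 2 * \<alpha>)"

text \<open>Fractional Laplacian at x, as an extended real: the integral is taken as
  (integral of positive part) - (integral of negative part) in [-oo, oo]; for
  absolutely convergent integrals this is the usual Lebesgue integral.\<close>
definition frac_lap :: "real \<Rightarrow> ('a::euclidean_space \<Rightarrow> real) \<Rightarrow> 'a \<Rightarrow> ereal" where
  "frac_lap \<alpha> h x = - ereal (frac_const DIM('a) \<alpha>) *
     (enn2ereal (\<integral>\<^sup>+ y. ennreal (frac_integrand \<alpha> h x y) \<partial>lborel)
      - enn2ereal (\<integral>\<^sup>+ y. ennreal (- frac_integrand \<alpha> h x y) \<partial>lborel))"

end

theory Submission imports Defs begin

lemma ereal_key: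
  fixes P1 N1 P2 N2 :: ereal and c :: real
  assumes "c > 0" "0 \<le> P1" "0 \<le> N1" "0 \<le> P2" "0 \<le> N2"
    "P1 \<le> ereal c * P2" "ereal c * N2 \<le> N1"
  shows "P1 - N1 \<le> ereal c * (P2 - N2)"
  using assms
  apply (cases P1; cases N1; cases P2; cases N2)
  apply (auto simp: algebra_simps)
  done

lemma neg_mult_ereal: "- ereal d * (E::ereal) = - (ereal d * E)"
  by (cases E) auto

lemma concave_pt:
  fixes a b s :: real
  assumes "0 < s" "s < 1" "0 < A" "0 \<le> t"
  shows "t powr s \<le> A powr s + s * A powr (s - 1) * (t - A)"
proof (cases "t = 0")
  case True
  have "A powr (s-1) * A = A powr s"
    using assms by (simp add: powr_diff)
  then show ?thesis using True assms
    by (simp add: algebra_simps)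
next
  case False
  then have t: "t > 0" using assms by simp
  have y: "t powr s * A powr (1 - s) \<le> s * t + (1 - s) * A"
    using Youngs_inequality_0[of s "1-s" t A] assms t by simp
  have "A powr (s-1) * (t powr s * A powr (1 - s)) = t powr s"
  proof -
    have "A powr (s-1) * A powr (1 - s) = 1"
      using assms by (simp add: powr_add[symmetric])
    then show ?thesis by (metis mult.left_commute mult_1_right)
  qed
  moreover have "A powr (s-1) * (s * t + (1 - s) * A) = A powr s + s * A powr (s - 1) * (t - A)"
  proof -
    have "A powr (s-1) * A = A powr s" using assms by (simp add: powr_diff)
    then show ?thesis by (simp add: algebra_simps)
  qed
  moreover have "A powr (s-1) * (t powr s * A powr (1 - s)) \<le> A powr (s-1) * (s * t + (1 - s) * A)"
    using y by (simp add: mult_left_mono)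
  ultimately show ?thesis by linarith
qed

lemma numer_ineq:
  fixes a b \<tau>1 \<tau>2 :: real
  assumes "0 < \<tau>1" "\<tau>1 < \<tau>2" "a > 0"
  shows "b powr \<tau>1 \<le> a powr \<tau>1 + \<tau>1 / \<tau>2 * a powr (\<tau>1 - \<tau>2) * (b powr \<tau>2 - a powr \<tau>2)"
proof -
  define s where "s = \<tau>1 / \<tau>2"
  have s: "0 < s" "s < 1" using assms by (auto simp: s_def)
  have bb: "b powr \<tau>1 = (b powr \<tau>2) powr s"
    using assms by (simp add: powr_powr s_def)
  have aa: "a powr \<tau>1 = (a powr \<tau>2) powr s"
    using assms by (simp add: powr_powr s_def)
  have aa2: "a powr (\<tau>1 - \<tau>2) = (a powr \<tau>2) powr (s - 1)"
    using assms by (simp add: powr_powr s_def algebra_simps diff_divide_distrib)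
  show ?thesis
    using concave_pt[OF s, of "a powr \<tau>2" "b powr \<tau>2"] assms
    unfolding bb aa aa2 s_def by simp
qed

theorem proposition3p15:
  fixes f :: "'a::euclidean_space \<Rightarrow> real"
    and \<Lambda> :: "'a set"
    and \<alpha> \<tau>1 \<tau>2 K q :: real
    and x :: 'a
  assumes "0 < \<alpha>" and "\<alpha> < 1"
    and "0 < \<tau>1" and "\<tau>1 < \<tau>2"
    and "closed \<Lambda>" and "\<Lambda> \<in> null_sets lborel"
    and "f \<in> L2alpha \<alpha>"
    and "smooth_on (- \<Lambda>) f"
    and "f \<in> Lloc \<tau>2"
    and "K > 0" and "q > 0"
    and "\<And>y. y \<notin> \<Lambda> \<Longrightarrow>
           (1 / K) * infdist y \<Lambda> powr (- q) \<le> f y \<and> f y \<le> K * infdist y \<Lambda> powr (- q)"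
    and "x \<notin> \<Lambda>"
  shows "frac_lap \<alpha> (\<lambda>y. f y powr \<tau>1) x \<ge>
           ereal (\<tau>1 / \<tau>2 * f x powr (\<tau>1 - \<tau>2)) * frac_lap \<alpha> (\<lambda>y. f y powr \<tau>2) x"
proof (cases "\<Lambda> = {}")
  case True
  have f0: "f y = 0" for y
    using assms(12)[of y] True by (simp add: infdist_def)
  have z: "(\<lambda>y. f y powr t) = (\<lambda>y. 0)" for t
    by (simp add: f0)
  have fi: "frac_integrand \<alpha> (\<lambda>y. 0::real) x y = (0::real)" for y
    by (simp add: frac_integrand_def)
  have l0: "frac_lap \<alpha> (\<lambda>y. 0::real) x = 0"
    unfolding frac_lap_def fi by simp
  show ?thesis unfolding z l0 by simp
next
  case False
  define d where "d = frac_const DIM('a) \<alpha>"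
  have d0: "d \<ge> 0"
    unfolding d_def frac_const_def using assms(1,2)
    by (intro divide_nonneg_pos mult_nonneg_nonneg mult_pos_pos Gamma_real_pos) auto
  have "infdist x \<Lambda> > 0"
    using infdist_pos_not_in_closed[OF assms(5) False assms(13)] .
  then have fx: "f x > 0"
    using assms(12)[OF assms(13)] assms(10)
    by (smt (verit) divide_pos_pos mult_pos_pos powr_gt_zero)
  define c where "c = \<tau>1 / \<tau>2 * f x powr (\<tau>1 - \<tau>2)"
  have c0: "c > 0" unfolding c_def using fx assms(3,4) by simp
  have fm[measurable]: "f \<in> borel_measurable lborel"
    using assms(7) by (simp add: L2alpha_def)
  define h where "h = (\<lambda>t y. frac_integrand \<alpha> (\<lambda>y. f y powr t) x y)"
  have hm[measurable]: "h t \<in> borel_measurable lborel" for t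
    unfolding h_def frac_integrand_def by measurable
  have pt: "h \<tau>1 y \<le> c * h \<tau>2 y" for y
  proof -
    have n1: "f z powr \<tau>1 \<le> f x powr \<tau>1 + c * (f z powr \<tau>2 - f x powr \<tau>2)" for z
      using numer_ineq[OF assms(3,4) fx, of "f z"] unfolding c_def by simp
    have "f (x+y) powr \<tau>1 + f (x-y) powr \<tau>1 - 2 * f x powr \<tau>1
          \<le> c * (f (x+y) powr \<tau>2 + f (x-y) powr \<tau>2 - 2 * f x powr \<tau>2)"
      using n1[of "x+y"] n1[of "x-y"] by (simp add: algebra_simps)
    then have "(f (x+y) powr \<tau>1 + f (x-y) powr \<tau>1 - 2 * f x powr \<tau>1) / norm y powr (real DIM('a) + 2 * \<alpha>)
          \<le> c * (f (x+y) powr \<tau>2 + f (x-y) powr \<tau>2 - 2 * f x powr \<tau>2) / norm y powr (real DIM('a) + 2 * \<alpha>)"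
      by (simp add: divide_right_mono)
    then show ?thesis unfolding h_def frac_integrand_def by simp
  qed
  define P1 where "P1 = (\<integral>\<^sup>+ y. ennreal (h \<tau>1 y) \<partial>lborel)"
  define N1 where "N1 = (\<integral>\<^sup>+ y. ennreal (- h \<tau>1 y) \<partial>lborel)"
  define P2 where "P2 = (\<integral>\<^sup>+ y. ennreal (h \<tau>2 y) \<partial>lborel)"
  define N2 where "N2 = (\<integral>\<^sup>+ y. ennreal (- h \<tau>2 y) \<partial>lborel)"
  have P: "P1 \<le> ennreal c * P2"
  proof -
    have "P1 \<le> (\<integral>\<^sup>+ y. ennreal c * ennreal (h \<tau>2 y) \<partial>lborel)"
      unfolding P1_def
      by (intro nn_integral_mono) (metis c0 ennreal_leI ennreal_mult' less_le pt)
    also have "\<dots> = ennreal c * P2" unfolding P2_def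
      by (rule nn_integral_cmult) measurable
    finally show ?thesis .
  qed
  have N: "ennreal c * N2 \<le> N1"
  proof -
    have "ennreal c * N2 = (\<integral>\<^sup>+ y. ennreal c * ennreal (- h \<tau>2 y) \<partial>lborel)" unfolding N2_def
      by (rule nn_integral_cmult[symmetric]) measurable
    also have "\<dots> \<le> N1"
      unfolding N1_def
    proof (intro nn_integral_mono)
      fix y
      have "ennreal c * ennreal (- h \<tau>2 y) = ennreal (c * (- h \<tau>2 y))"
        using c0 ennreal_mult'[of c "- h \<tau>2 y"] by simp
      also have "\<dots> \<le> ennreal (- h \<tau>1 y)"
        using pt[of y] by (intro ennreal_leI) simp
      finally show "ennreal c * ennreal (- h \<tau>2 y) \<le> ennreal (- h \<tau>1 y)" .
    qed
    finally show ?thesis .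
  qed
  have ec: "enn2ereal (ennreal c) = ereal c" using c0 by simp
  have key: "enn2ereal P1 - enn2ereal N1 \<le> ereal c * (enn2ereal P2 - enn2ereal N2)"
  proof (rule ereal_key[OF c0])
    show "enn2ereal P1 \<le> ereal c * enn2ereal P2"
      using P by (metis ec less_eq_ennreal.rep_eq times_ennreal.rep_eq)
    show "ereal c * enn2ereal N2 \<le> enn2ereal N1"
      using N by (metis ec less_eq_ennreal.rep_eq times_ennreal.rep_eq)
  qed (auto simp: enn2ereal_nonneg)
  have L: "frac_lap \<alpha> (\<lambda>y. f y powr \<tau>1) x = - (ereal d * (enn2ereal P1 - enn2ereal N1))"
    unfolding frac_lap_def d_def P1_def N1_def h_def by (rule neg_mult_ereal)
  have R: "frac_lap \<alpha> (\<lambda>y. f y powr \<tau>2) x = - (ereal d * (enn2ereal P2 - enn2ereal N2))"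
    unfolding frac_lap_def d_def P2_def N2_def h_def by (rule neg_mult_ereal)
  have "ereal d * (enn2ereal P1 - enn2ereal N1) \<le> ereal d * (ereal c * (enn2ereal P2 - enn2ereal N2))"
    using key d0 by (intro ereal_mult_left_mono) auto
  then have A: "- (ereal d * (ereal c * (enn2ereal P2 - enn2ereal N2))) \<le> - (ereal d * (enn2ereal P1 - enn2ereal N1))"
    by simp
  have B: "ereal c * - (ereal d * (enn2ereal P2 - enn2ereal N2)) = - (ereal d * (ereal c * (enn2ereal P2 - enn2ereal N2)))"
    by (simp only: ereal_mult_minus_left ereal_mult_minus_right mult.left_commute)
  show ?thesis unfolding L R c_def[symmetric] B by (rule A)
qed

end
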